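(* Let $G$ be a topological gyrogroup. Then $G^{\bullet}$ is $\sigma$-compact if and only if $G$ is $\sigma$-compact.
   Context: A gyrogroup is a set $G$ with a binary operation $\oplus$ such that: (G1) there is a unique identity $0$ with $0\oplus a=a=a\oplus 0$; (G2) each $x$ has a unique inverse $\ominus x$ with $\ominus x\oplus x=0=x\oplus(\ominus x)$; (G3) for all $x,y$ there is an automorphism $\mathrm{gyr}[x,y]$ of $(G,\oplus)$ with $x\oplus(y\oplus z)=(x\oplus y)\oplus \mathrm{gyr}[x,y](z)$ for all $z$; (G4) $\mathrm{gyr}[x\oplus y,y]=\mathrm{gyr}[x,y]$. A topological gyrogroup is a gyrogroup with a topology (all spaces are assumed $T_1$) such that $\oplus$ is jointly continuous and $x\mapsto\ominus x$ is continuous. A space is $\sigma$-compact if it is a countable union of compact subsets. Construction: let $J=[0,1)$ and let $G^{\bullet}$ be the set of all functions $f:J\to G$ for which there exist $0=a_0<a_1<\dots<a_n=1$ with $f$ constant on each $[a_k,a_{k+1})$, with pointwise operation $(f\oplus^{\bullet}g)(r)=f(r)\oplus g(r)$. For an open neighbourhood $V$ of $0$ in $G$ and $\varepsilon>0$ let $O(V,\varepsilon)=\{f\in G^{\bullet}:\mu(\{r\in J: f(r)\notin V\})<\varepsilon\}$, $\mu$ Lebesgue measure. $G^{\bullet}$ carries the topological gyrogroup topology in which the sets $f\oplus^{\bullet}O(V,\varepsilon)$ form a local base at each $f\in G^{\bullet}$. *)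

theory Defs
  imports "HOL-Analysis.Analysis"
begin

definition gyrogroup :: "'a set \<Rightarrow> ('a \<Rightarrow> 'a \<Rightarrow> 'a) \<Rightarrow> 'a \<Rightarrow> ('a \<Rightarrow> 'a) \<Rightarrow> bool" where
  "gyrogroup G gop e neg \<longleftrightarrow>
     (\<forall>x\<in>G. \<forall>y\<in>G. gop x y \<in> G) \<and> e \<in> G \<and> (\<forall>x\<in>G. neg x \<in> G) \<and>
     \<comment> \<open>(G1) unique identity\<close>
     (\<forall>a\<in>G. gop e a = a \<and> gop a e = a) \<and>
     (\<forall>e'\<in>G. (\<forall>a\<in>G. gop e' a = a \<and> gop a e' = a) \<longrightarrow> e' = e) \<and>
     \<comment> \<open>(G2) unique inverse\<close>
     (\<forall>x\<in>G. gop (neg x) x = e \<and> gop x (neg x) = e) \<and>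
     (\<forall>x\<in>G. \<forall>y\<in>G. gop y x = e \<and> gop x y = e \<longrightarrow> y = neg x) \<and>
     \<comment> \<open>(G3), (G4) gyroautomorphisms\<close>
     (\<exists>gyr :: 'a \<Rightarrow> 'a \<Rightarrow> 'a \<Rightarrow> 'a.
        (\<forall>x\<in>G. \<forall>y\<in>G. bij_betw (gyr x y) G G \<and>
            (\<forall>a\<in>G. \<forall>b\<in>G. gyr x y (gop a b) = gop (gyr x y a) (gyr x y b))) \<and>
        (\<forall>x\<in>G. \<forall>y\<in>G. \<forall>z\<in>G. gop x (gop y z) = gop (gop x y) (gyr x y z)) \<and>
        (\<forall>x\<in>G. \<forall>y\<in>G. \<forall>z\<in>G. gyr (gop x y) y z = gyr x y z))"

definition topological_gyrogroup ::
  "'a set \<Rightarrow> ('a \<Rightarrow> 'a \<Rightarrow> 'a) \<Rightarrow> 'a \<Rightarrow> ('a \<Rightarrow> 'a) \<Rightarrow> 'a topology \<Rightarrow> bool" where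
  "topological_gyrogroup G gop e neg T \<longleftrightarrow>
     gyrogroup G gop e neg \<and> topspace T = G \<and> t1_space T \<and>
     continuous_map (prod_topology T T) T (\<lambda>(x, y). gop x y) \<and>
     continuous_map T T neg"

definition sigma_compact :: "'a topology \<Rightarrow> bool" where
  "sigma_compact X \<longleftrightarrow> (\<exists>K :: nat \<Rightarrow> 'a set. (\<forall>n. compactin X (K n)) \<and> topspace X = (\<Union>n. K n))"

text \<open>J = [0,1). Elements of G-bullet are step functions J \<rightarrow> G, extended by undefined outside J.\<close>
definition J :: "real set" where "J = {0..<1}"

definition step_funs :: "'a set \<Rightarrow> (real \<Rightarrow> 'a) set" where
  "step_funs G = {f. (\<forall>r. r \<notin> J \<longrightarrow> f r = undefined) \<and>
     (\<exists>(a :: nat \<Rightarrow> real) n. a 0 = 0 \<and> a n = 1 \<and> (\<forall>k<n. a k < a (Suc k)) \<and>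
        (\<forall>k<n. \<exists>c\<in>G. \<forall>r\<in>{a k..<a (Suc k)}. f r = c))}"

definition pw_op :: "('a \<Rightarrow> 'a \<Rightarrow> 'a) \<Rightarrow> (real \<Rightarrow> 'a) \<Rightarrow> (real \<Rightarrow> 'a) \<Rightarrow> real \<Rightarrow> 'a" where
  "pw_op gop f g = (\<lambda>r. if r \<in> J then gop (f r) (g r) else undefined)"

definition O_nbhd :: "'a set \<Rightarrow> 'a set \<Rightarrow> real \<Rightarrow> (real \<Rightarrow> 'a) set" where
  "O_nbhd G V \<epsilon> = {f \<in> step_funs G. measure lebesgue {r \<in> J. f r \<notin> V} < \<epsilon>}"

definition bullet_topology ::
  "'a set \<Rightarrow> ('a \<Rightarrow> 'a \<Rightarrow> 'a) \<Rightarrow> 'a \<Rightarrow> 'a topology \<Rightarrow> (real \<Rightarrow> 'a) topology" where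
  "bullet_topology G gop e T = topology (\<lambda>U. U \<subseteq> step_funs G \<and>
     (\<forall>f\<in>U. \<exists>V \<epsilon>. openin T V \<and> e \<in> V \<and> \<epsilon> > 0 \<and> pw_op gop f ` O_nbhd G V \<epsilon> \<subseteq> U))"

end

theory Submission
  imports Defs
begin


locale tgg =
  fixes G :: "'a set" and gop :: "'a \<Rightarrow> 'a \<Rightarrow> 'a" and e :: 'a and neg :: "'a \<Rightarrow> 'a"
    and T :: "'a topology"
  assumes tg: "topological_gyrogroup G gop e neg T"
begin

lemma gg: "gyrogroup G gop e neg" using tg by (simp add: topological_gyrogroup_def)
lemma topT: "topspace T = G" using tg by (simp add: topological_gyrogroup_def)
lemma t1T: "t1_space T" using tg by (simp add: topological_gyrogroup_def)
lemma contop: "continuous_map (prod_topology T T) T (\<lambda>(x, y). gop x y)"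
  using tg by (simp add: topological_gyrogroup_def)
lemma contneg: "continuous_map T T neg" using tg by (simp add: topological_gyrogroup_def)

lemma closed[simp]: "x \<in> G \<Longrightarrow> y \<in> G \<Longrightarrow> gop x y \<in> G" using gg by (simp add: gyrogroup_def)
lemma e_in[simp]: "e \<in> G" using gg by (simp add: gyrogroup_def)
lemma neg_in[simp]: "x \<in> G \<Longrightarrow> neg x \<in> G" using gg by (simp add: gyrogroup_def)
lemma lid[simp]: "x \<in> G \<Longrightarrow> gop e x = x" using gg by (simp add: gyrogroup_def)
lemma rid[simp]: "x \<in> G \<Longrightarrow> gop x e = x" using gg by (simp add: gyrogroup_def)
lemma linv[simp]: "x \<in> G \<Longrightarrow> gop (neg x) x = e" using gg by (simp add: gyrogroup_def)
lemma rinv[simp]: "x \<in> G \<Longrightarrow> gop x (neg x) = e" using gg by (simp add: gyrogroup_def)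

lemma negneg[simp]: "x \<in> G \<Longrightarrow> neg (neg x) = x"
proof -
  assume x: "x \<in> G"
  have "\<forall>x\<in>G. \<forall>y\<in>G. gop y x = e \<and> gop x y = e \<longrightarrow> y = neg x" using gg by (simp add: gyrogroup_def)
  then show ?thesis using x by (metis linv rinv neg_in)
qed

lemma lcancel[simp]: "a \<in> G \<Longrightarrow> b \<in> G \<Longrightarrow> gop (neg a) (gop a b) = b"
proof -
  assume a: "a \<in> G" and b: "b \<in> G"
  obtain gyr where bij0: "\<forall>x\<in>G. \<forall>y\<in>G. bij_betw (gyr x y) G G \<and>
            (\<forall>a\<in>G. \<forall>b\<in>G. gyr x y (gop a b) = gop (gyr x y a) (gyr x y b))"
    and G3: "\<forall>x\<in>G. \<forall>y\<in>G. \<forall>z\<in>G. gop x (gop y z) = gop (gop x y) (gyr x y z)"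
    and G4: "\<forall>x\<in>G. \<forall>y\<in>G. \<forall>z\<in>G. gyr (gop x y) y z = gyr x y z"
    using gg unfolding gyrogroup_def by blast
  have bij: "\<forall>x\<in>G. \<forall>y\<in>G. bij_betw (gyr x y) G G" using bij0 by blast
  have gyrin: "gyr x y z \<in> G" if "x \<in> G" "y \<in> G" "z \<in> G" for x y z
    using bij that by (meson bij_betwE)
  have inj: "gop x y = gop x z \<Longrightarrow> y = z" if "x \<in> G" "y \<in> G" "z \<in> G" for x y z
  proof -
    assume h: "gop x y = gop x z"
    have "gop (neg x) (gop x y) = gyr (neg x) x y" using G3[rule_format, of "neg x" x] that gyrin by simp
    moreover have "gop (neg x) (gop x z) = gyr (neg x) x z" using G3[rule_format, of "neg x" x] that gyrin by simp
    ultimately have "gyr (neg x) x y = gyr (neg x) x z" using h by simp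
    then show ?thesis using bij that by (meson bij_betw_def inj_onD neg_in)
  qed
  have "gyr e a b \<in> G" using bij a b by (meson bij_betwE e_in)
  moreover have "gop a b = gop a (gyr e a b)" using G3[rule_format, of e a b] a b gyrin by simp
  ultimately have 1: "gyr e a b = b" using inj a b by metis
  have "gop (neg a) (gop a b) = gyr (neg a) a b" using G3[rule_format, of "neg a" a b] a b gyrin by simp
  also have "\<dots> = gyr e a b" using G4[rule_format, of "neg a" a b] a b by simp
  finally show ?thesis using 1 by simp
qed

lemma rcancel[simp]: "a \<in> G \<Longrightarrow> b \<in> G \<Longrightarrow> gop a (gop (neg a) b) = b"
  using lcancel[of "neg a" b] by simp

lemma ginj: "a \<in> G \<Longrightarrow> b \<in> G \<Longrightarrow> c \<in> G \<Longrightarrow> gop a b = gop a c \<Longrightarrow> b = c"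
  by (metis lcancel)

end


lemma seq_cover: "a 0 \<le> r \<Longrightarrow> r < a n \<Longrightarrow> \<exists>k<n. a k \<le> r \<and> r < a (Suc k)"
  for a :: "nat \<Rightarrow> real"
proof (induction n)
  case 0 then show ?case by simp
next
  case (Suc n)
  show ?case
  proof (cases "r < a n")
    case True then show ?thesis using Suc by (meson less_Suc_eq)
  next
    case False then show ?thesis using Suc by (intro exI[of _ n]) auto
  qed
qed

lemma seq_mono: "\<forall>k<n. a k < a (Suc k) \<Longrightarrow> i \<le> j \<Longrightarrow> j \<le> n \<Longrightarrow> a i \<le> a j"
  for a :: "nat \<Rightarrow> real"
proof (induction j)
  case 0 then show ?case by simp
next
  case (Suc j)
  then show ?case by (metis Suc_le_eq le_Suc_eq less_imp_le order.trans order_refl)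
qed

definition stepP :: "'a set \<Rightarrow> (real \<Rightarrow> 'a) \<Rightarrow> bool" where
  "stepP G f \<longleftrightarrow> (\<forall>r. r \<notin> J \<longrightarrow> f r = undefined) \<and> (\<forall>r\<in>J. f r \<in> G) \<and>
     (\<exists>P. finite P \<and> (\<forall>r\<in>J. \<forall>r'\<in>J. r \<le> r' \<and> (\<forall>p\<in>P. \<not> (r < p \<and> p \<le> r')) \<longrightarrow> f r = f r'))"

lemma step_funsE:
  assumes "f \<in> step_funs G"
  obtains a n where "a 0 = 0" "a n = 1" "\<forall>k<n. a k < a (Suc k)"
    "\<forall>k<n. \<forall>r\<in>{a k..<a (Suc k)}. f r = f (a k)" "\<forall>k<n. f (a k) \<in> G"
    "\<forall>r. r \<notin> J \<longrightarrow> f r = undefined"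
proof -
  obtain a n where h: "a 0 = 0" "a n = 1" "\<forall>k<n. a k < a (Suc k)"
    "\<forall>k<n. \<exists>c\<in>G. \<forall>r\<in>{a k..<a (Suc k)}. f r = c" "\<forall>r. r \<notin> J \<longrightarrow> f r = undefined"
    using assms unfolding step_funs_def mem_Collect_eq by (elim conjE exE) (rule that, assumption+)
  have hh: "\<forall>k<n. (\<forall>r\<in>{a k..<a (Suc k)}. f r = f (a k)) \<and> f (a k) \<in> G"
  proof (intro allI impI)
    fix k assume k: "k < n"
    from h(4) k obtain c where c: "c \<in> G" "\<forall>r\<in>{a k..<a (Suc k)}. f r = c" by blast
    have "a k \<in> {a k..<a (Suc k)}" using h(3) k by simp
    from bspec[OF c(2) this] have fa: "f (a k) = c" .
    show "(\<forall>r\<in>{a k..<a (Suc k)}. f r = f (a k)) \<and> f (a k) \<in> G" using c fa by simp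
  qed
  have h4: "\<forall>k<n. \<forall>r\<in>{a k..<a (Suc k)}. f r = f (a k)"
    by (intro allI impI) (erule conjunct1[OF hh[rule_format]])
  have h5: "\<forall>k<n. f (a k) \<in> G" by (intro allI impI) (erule conjunct2[OF hh[rule_format]])
  show ?thesis by (rule that[of a n, OF h(1) h(2) h(3) h4 h5 h(5)])
qed

lemma step_funsE2:
  assumes "f \<in> step_funs G"
  obtains a n c where "a 0 = 0" "a n = 1" "\<forall>k<n. a k < a (Suc k)"
    "\<forall>k<n. \<forall>r\<in>{a k..<a (Suc k)}. f r = c k" "\<forall>k<n. c k \<in> G"
    "\<forall>r. r \<notin> J \<longrightarrow> f r = undefined"
proof -
  obtain a n where h: "a 0 = 0" "a n = 1" "\<forall>k<n. a k < a (Suc k)"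
    "\<forall>k<n. \<forall>r\<in>{a k..<a (Suc k)}. f r = f (a k)" "\<forall>k<n. f (a k) \<in> G"
    "\<forall>r. r \<notin> J \<longrightarrow> f r = undefined" by (rule step_funsE[OF assms])
  show ?thesis by (rule that[of a n "\<lambda>k. f (a k)", OF h])
qed

lemma step_funs_stepP: "f \<in> step_funs G \<Longrightarrow> stepP G f"
proof -
  assume f: "f \<in> step_funs G"
  obtain a n c where h: "a 0 = 0" "a n = 1" "\<forall>k<n. a k < a (Suc k)"
    "\<forall>k<n. \<forall>r\<in>{a k..<a (Suc k)}. f r = c k" "\<forall>k<n. c k \<in> G"
    "\<forall>r. r \<notin> J \<longrightarrow> f r = undefined" by (rule step_funsE2[OF f])
  have cov: "\<exists>k<n. a k \<le> r \<and> r < a (Suc k)" if "r \<in> J" for r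
    using seq_cover[of a r n] h that by (simp add: J_def)
  have vals: "\<forall>r\<in>J. f r \<in> G"
    using cov h by (metis atLeastLessThan_iff)
  have "\<forall>r\<in>J. \<forall>r'\<in>J. r \<le> r' \<and> (\<forall>p\<in>a ` {..n}. \<not> (r < p \<and> p \<le> r')) \<longrightarrow> f r = f r'"
  proof (intro ballI impI)
    fix r r' assume r: "r \<in> J" and r': "r' \<in> J"
      and c: "r \<le> r' \<and> (\<forall>p\<in>a ` {..n}. \<not> (r < p \<and> p \<le> r'))"
    obtain k where k: "k < n" "a k \<le> r" "r < a (Suc k)" using cov[OF r] by blast
    have "a (Suc k) \<in> a ` {..n}" using k by auto
    then have "r' < a (Suc k)" using c k by force
    then show "f r = f r'" using h(4) k c by auto
  qed
  then show ?thesis unfolding stepP_def using h vals by blast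
qed

lemma stepP_step_funs: "stepP G f \<Longrightarrow> f \<in> step_funs G"
proof -
  assume sf: "stepP G f"
  then obtain P where P: "finite P"
    "\<forall>r\<in>J. \<forall>r'\<in>J. r \<le> r' \<and> (\<forall>p\<in>P. \<not> (r < p \<and> p \<le> r')) \<longrightarrow> f r = f r'"
    and und: "\<forall>r. r \<notin> J \<longrightarrow> f r = undefined" and vals: "\<forall>r\<in>J. f r \<in> G"
    unfolding stepP_def by blast
  define S :: "real set" where "S = insert 0 (insert 1 (P \<inter> {0<..<1}))"
  have finS: "finite S" using P by (simp add: S_def)
  define xs where "xs = sorted_list_of_set S"
  have setxs: "set xs = S" using finS by (simp add: xs_def)
  have sxs: "sorted xs" "distinct xs" by (simp_all add: xs_def)
  have S01: "S \<subseteq> {0..1}" by (auto simp: S_def)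
  define n where "n = length xs - 1"
  define a where "a = (\<lambda>k. xs ! k)"
  have len: "length xs = n + 1"
  proof -
    have "{0,1} \<subseteq> S" by (auto simp: S_def)
    then have "card {0::real,1} \<le> card S" using finS by (intro card_mono) auto
    then have "card S \<ge> 2" by simp
    then have "length xs \<ge> 2" using distinct_card[OF sxs(2)] setxs by simp
    then show ?thesis by (simp add: n_def)
  qed
  have strict: "a i < a j" if "i < j" "j \<le> n" for i j
  proof -
    have "a i \<le> a j" using sorted_nth_mono[OF sxs(1), of i j] that len by (simp add: a_def)
    moreover have "a i \<noteq> a j" using sxs(2) that len by (simp add: a_def nth_eq_iff_index_eq)
    ultimately show ?thesis by simp
  qed
  have ain: "a k \<in> S" if "k \<le> n" for k using that len setxs by (auto simp: a_def)
  have idx: "\<exists>j\<le>n. a j = x" if "x \<in> S" for x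
    using that setxs len by (metis Suc_eq_plus1 a_def in_set_conv_nth less_Suc_eq_le)
  have a0: "a 0 = 0"
  proof -
    obtain j where "j \<le> n" "a j = 0" using idx[of 0] by (auto simp: S_def)
    moreover have "a 0 \<ge> 0" using ain[of 0] S01 by auto
    ultimately show ?thesis using strict[of 0 j] by (cases "j = 0") auto
  qed
  have an: "a n = 1"
  proof -
    obtain j where "j \<le> n" "a j = 1" using idx[of 1] by (auto simp: S_def)
    moreover have "a n \<le> 1" using ain[of n] S01 by auto
    ultimately show ?thesis using strict[of j n] by (cases "j = n") auto
  qed
  have "\<forall>k<n. \<exists>c\<in>G. \<forall>r\<in>{a k..<a (Suc k)}. f r = c"
  proof (intro allI impI)
    fix k assume k: "k < n"
    have ak: "a k \<in> J" using ain[of k] S01 strict[of k "Suc k"] ain[of "Suc k"] k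
      by (auto simp: J_def)
    have "\<forall>r\<in>{a k..<a (Suc k)}. f r = f (a k)"
    proof
      fix r assume r: "r \<in> {a k..<a (Suc k)}"
      have rJ: "r \<in> J" using r ak ain[of "Suc k"] S01 k by (auto simp: J_def)
      have "\<forall>p\<in>P. \<not> (a k < p \<and> p \<le> r)"
      proof (intro ballI notI)
        fix p assume p: "p \<in> P" "a k < p \<and> p \<le> r"
        have "p \<in> S" using p r ak ain[of "Suc k"] S01 k by (auto simp: S_def J_def)
        then obtain j where j: "j \<le> n" "a j = p" using idx by blast
        have "k < j"
        proof (rule ccontr)
          assume "\<not> k < j" then have "j \<le> k" by simp
          then have "a j \<le> a k" using strict[of j k] k by (cases "j = k") auto
          with p j show False by simp
        qed
        moreover have "j < Suc k"
        proof (rule ccontr)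
          assume "\<not> j < Suc k" then have "Suc k \<le> j" by simp
          then have "a (Suc k) \<le> a j" using strict[of "Suc k" j] j by (cases "j = Suc k") auto
          with p j r show False by simp
        qed
        ultimately show False by simp
      qed
      then show "f r = f (a k)" using P(2) ak rJ r by (metis atLeastLessThan_iff)
    qed
    then show "\<exists>c\<in>G. \<forall>r\<in>{a k..<a (Suc k)}. f r = c" using vals ak by blast
  qed
  moreover have "\<forall>k<n. a k < a (Suc k)" using strict by simp
  ultimately show ?thesis unfolding step_funs_def using a0 an und
    by (intro CollectI conjI exI[of _ a] exI[of _ n]) auto
qed

lemma step_funs_iff: "f \<in> step_funs G \<longleftrightarrow> stepP G f"
  using step_funs_stepP stepP_step_funs by blast


lemma step_cover:
  assumes "a 0 = 0" "a n = 1" "\<forall>k<n. a k < a (Suc k)" "r \<in> J"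
  shows "\<exists>k<n. a k \<le> r \<and> r < a (Suc k)"
  using seq_cover[of a r n] assms by (simp add: J_def)

lemma step_ivl_J:
  assumes "a 0 = 0" "a n = 1" "\<forall>k<n. a k < a (Suc k)" "k < n"
  shows "{a k..<a (Suc k)} \<subseteq> J"
proof -
  have "0 \<le> a k" using seq_mono[of n a 0 k] assms by simp
  moreover have "a (Suc k) \<le> 1" using seq_mono[of n a "Suc k" n] assms by simp
  ultimately show ?thesis by (auto simp: J_def)
qed

lemma step_meas:
  assumes f: "f \<in> step_funs G"
  shows "{r\<in>J. Q (f r)} \<in> sets lebesgue"
proof -
  obtain a n c where h: "a 0 = 0" "a n = 1" "\<forall>k<n. a k < a (Suc k)"
    "\<forall>k<n. \<forall>r\<in>{a k..<a (Suc k)}. f r = c k" "\<forall>k<n. c k \<in> G"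
    "\<forall>r. r \<notin> J \<longrightarrow> f r = undefined" by (rule step_funsE2[OF f])
  have "{r\<in>J. Q (f r)} = (\<Union>k\<in>{k. k < n \<and> Q (c k)}. {a k..<a (Suc k)})"
  proof (intro set_eqI iffI)
    fix r assume r: "r \<in> {r\<in>J. Q (f r)}"
    then obtain k where k: "k < n" "a k \<le> r" "r < a (Suc k)" using step_cover[OF h(1-3)] by blast
    then have "f r = c k" using h(4) by simp
    then show "r \<in> (\<Union>k\<in>{k. k < n \<and> Q (c k)}. {a k..<a (Suc k)})" using r k by auto
  next
    fix r assume "r \<in> (\<Union>k\<in>{k. k < n \<and> Q (c k)}. {a k..<a (Suc k)})"
    then obtain k where k: "k < n" "Q (c k)" "r \<in> {a k..<a (Suc k)}" by blast
    then have "f r = c k" using h(4)[rule_format, OF k(1) k(3)] by simp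
    moreover have "r \<in> J" using step_ivl_J[OF h(1-3) k(1)] k(3) by blast
    ultimately show "r \<in> {r\<in>J. Q (f r)}" using k by simp
  qed
  moreover have "(\<Union>k\<in>{k. k < n \<and> Q (c k)}. {a k..<a (Suc k)}) \<in> sets lebesgue"
    by (intro sets.finite_UN) auto
  ultimately show ?thesis by simp
qed

lemma J_bounded: "bounded J" by (simp add: J_def)

lemma step_lmeas:
  assumes f: "f \<in> step_funs G"
  shows "{r\<in>J. Q (f r)} \<in> lmeasurable"
  by (rule bounded_set_imp_lmeasurable[OF bounded_subset[OF J_bounded] step_meas[OF f]]) auto

lemma J_lmeas: "J \<in> lmeasurable"
  by (rule bounded_set_imp_lmeasurable) (auto simp: J_def)
lemma measure_J: "measure lebesgue J = 1" by (simp add: J_def)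

lemma step_vals:
  assumes f: "f \<in> step_funs G"
  shows "finite (f ` J)" "f ` J \<subseteq> G"
proof -
  obtain a n c where h: "a 0 = 0" "a n = 1" "\<forall>k<n. a k < a (Suc k)"
    "\<forall>k<n. \<forall>r\<in>{a k..<a (Suc k)}. f r = c k" "\<forall>k<n. c k \<in> G"
    "\<forall>r. r \<notin> J \<longrightarrow> f r = undefined" by (rule step_funsE2[OF f])
  have "f ` J \<subseteq> c ` {..<n}"
  proof
    fix x assume "x \<in> f ` J"
    then obtain r where r: "r \<in> J" "x = f r" by blast
    then obtain k where k: "k < n" "a k \<le> r" "r < a (Suc k)" using step_cover[OF h(1-3)] by blast
    then have "f r = c k" using h(4) by simp
    then show "x \<in> c ` {..<n}" using r k by auto
  qed
  then show "finite (f ` J)" using finite_subset by blast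
  show "f ` J \<subseteq> G" using \<open>f ` J \<subseteq> c ` {..<n}\<close> h(5) by auto
qed

lemma step_piece:
  assumes f: "f \<in> step_funs G" and r: "r \<in> J"
  shows "\<exists>x y. x < y \<and> {x..<y} \<subseteq> J \<and> r \<in> {x..<y} \<and> (\<forall>s\<in>{x..<y}. f s = f r)"
proof -
  obtain a n c where h: "a 0 = 0" "a n = 1" "\<forall>k<n. a k < a (Suc k)"
    "\<forall>k<n. \<forall>r\<in>{a k..<a (Suc k)}. f r = c k" "\<forall>k<n. c k \<in> G"
    "\<forall>r. r \<notin> J \<longrightarrow> f r = undefined" by (rule step_funsE2[OF f])
  obtain k where k: "k < n" "a k \<le> r" "r < a (Suc k)" using step_cover[OF h(1-3) r] by blast
  have "r \<in> {a k..<a (Suc k)}" using k by simp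
  then have "f r = c k" using h(4)[rule_format, OF k(1)] by simp
  then show ?thesis using k h(3,4) step_ivl_J[OF h(1-3) k(1)]
    by (intro exI[of _ "a k"] exI[of _ "a (Suc k)"]) auto
qed


definition negpw :: "('a \<Rightarrow> 'a) \<Rightarrow> (real \<Rightarrow> 'a) \<Rightarrow> real \<Rightarrow> 'a" where
  "negpw neg f = (\<lambda>r. if r \<in> J then neg (f r) else undefined)"

lemma O_mono:
  assumes "V \<subseteq> V'" "\<epsilon> \<le> \<epsilon>'"
  shows "O_nbhd G V \<epsilon> \<subseteq> O_nbhd G V' \<epsilon>'"
proof
  fix f assume f: "f \<in> O_nbhd G V \<epsilon>"
  then have fs: "f \<in> step_funs G" by (simp add: O_nbhd_def)
  have "measure lebesgue {r\<in>J. f r \<notin> V'} \<le> measure lebesgue {r\<in>J. f r \<notin> V}"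
    using assms(1) by (intro measure_mono_fmeasurable step_meas[OF fs] step_lmeas[OF fs]) auto
  then show "f \<in> O_nbhd G V' \<epsilon>'" using f assms(2) by (auto simp: O_nbhd_def)
qed

lemma stepPE:
  assumes f: "f \<in> step_funs G"
  obtains P where "finite P"
    "\<forall>r\<in>J. \<forall>r'\<in>J. r \<le> r' \<and> (\<forall>p\<in>P. \<not> (r < p \<and> p \<le> r')) \<longrightarrow> f r = f r'"
    "\<forall>r\<in>J. f r \<in> G"
proof -
  have s: "stepP G f" by (rule step_funs_stepP[OF f])
  have fv: "\<forall>r\<in>J. f r \<in> G" using s unfolding stepP_def by (rule conjunct1[OF conjunct2])
  have "\<exists>P. finite P \<and> (\<forall>r\<in>J. \<forall>r'\<in>J. r \<le> r' \<and> (\<forall>p\<in>P. \<not> (r < p \<and> p \<le> r')) \<longrightarrow> f r = f r')"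
    using s unfolding stepP_def by (rule conjunct2[OF conjunct2])
  then obtain P where P: "finite P \<and> (\<forall>r\<in>J. \<forall>r'\<in>J. r \<le> r' \<and> (\<forall>p\<in>P. \<not> (r < p \<and> p \<le> r')) \<longrightarrow> f r = f r')" ..
  show ?thesis by (rule that[OF conjunct1[OF P] conjunct2[OF P] fv])
qed

context tgg begin

lemma pw_step:
  assumes f: "f \<in> step_funs G" and g: "g \<in> step_funs G"
  shows "pw_op gop f g \<in> step_funs G"
proof -
  obtain P where P: "finite P" "\<forall>r\<in>J. \<forall>r'\<in>J. r \<le> r' \<and> (\<forall>p\<in>P. \<not> (r < p \<and> p \<le> r')) \<longrightarrow> f r = f r'"
    and fv: "\<forall>r\<in>J. f r \<in> G" by (rule stepPE[OF f])
  obtain Q where Q: "finite Q" "\<forall>r\<in>J. \<forall>r'\<in>J. r \<le> r' \<and> (\<forall>p\<in>Q. \<not> (r < p \<and> p \<le> r')) \<longrightarrow> g r = g r'"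
    and gv: "\<forall>r\<in>J. g r \<in> G" by (rule stepPE[OF g])
  have H: "\<forall>r\<in>J. \<forall>r'\<in>J. r \<le> r' \<and> (\<forall>p\<in>P \<union> Q. \<not> (r < p \<and> p \<le> r')) \<longrightarrow>
      pw_op gop f g r = pw_op gop f g r'"
  proof (intro ballI impI)
    fix r r' assume r: "r \<in> J" "r' \<in> J" and c: "r \<le> r' \<and> (\<forall>p\<in>P \<union> Q. \<not> (r < p \<and> p \<le> r'))"
    have "f r = f r'" by (rule P(2)[rule_format, OF r]) (use c in auto)
    moreover have "g r = g r'" by (rule Q(2)[rule_format, OF r]) (use c in auto)
    ultimately show "pw_op gop f g r = pw_op gop f g r'" using r by (simp add: pw_op_def)
  qed
  have u: "\<forall>r. r \<notin> J \<longrightarrow> pw_op gop f g r = undefined" by (simp add: pw_op_def)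
  have v: "\<forall>r\<in>J. pw_op gop f g r \<in> G" using fv gv by (simp add: pw_op_def)
  have "stepP G (pw_op gop f g)" unfolding stepP_def
    by (intro conjI u v exI[of _ "P \<union> Q"], simp add: P(1) Q(1), rule H)
  then show ?thesis by (simp add: step_funs_iff)
qed

lemma negpw_step:
  assumes f: "f \<in> step_funs G"
  shows "negpw neg f \<in> step_funs G"
proof -
  obtain P where P: "finite P" "\<forall>r\<in>J. \<forall>r'\<in>J. r \<le> r' \<and> (\<forall>p\<in>P. \<not> (r < p \<and> p \<le> r')) \<longrightarrow> f r = f r'"
    and fv: "\<forall>r\<in>J. f r \<in> G" by (rule stepPE[OF f])
  have H: "\<forall>r\<in>J. \<forall>r'\<in>J. r \<le> r' \<and> (\<forall>p\<in>P. \<not> (r < p \<and> p \<le> r')) \<longrightarrow>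
      negpw neg f r = negpw neg f r'"
  proof (intro ballI impI)
    fix r r' assume r: "r \<in> J" "r' \<in> J" and c: "r \<le> r' \<and> (\<forall>p\<in>P. \<not> (r < p \<and> p \<le> r'))"
    have "f r = f r'" by (rule P(2)[rule_format, OF r]) (use c in auto)
    then show "negpw neg f r = negpw neg f r'" using r by (simp add: negpw_def)
  qed
  have u: "\<forall>r. r \<notin> J \<longrightarrow> negpw neg f r = undefined" by (simp add: negpw_def)
  have v: "\<forall>r\<in>J. negpw neg f r \<in> G" using fv by (simp add: negpw_def)
  have "stepP G (negpw neg f)" unfolding stepP_def
    by (intro conjI u v exI[of _ P], simp add: P(1), rule H)
  then show ?thesis by (simp add: step_funs_iff)
qed

lemma step_undef: "f \<in> step_funs G \<Longrightarrow> r \<notin> J \<Longrightarrow> f r = undefined"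
  by (simp add: step_funs_def)

lemma step_valG: "f \<in> step_funs G \<Longrightarrow> r \<in> J \<Longrightarrow> f r \<in> G"
  by (rule subsetD[OF step_vals(2)]) auto

lemma pw_cancel:
  assumes f: "f \<in> step_funs G" and g: "g \<in> step_funs G"
  shows "pw_op gop f (pw_op gop (negpw neg f) g) = g"
proof
  fix r show "pw_op gop f (pw_op gop (negpw neg f) g) r = g r"
    using step_valG[OF f, of r] step_valG[OF g, of r] step_undef[OF g, of r]
    by (cases "r \<in> J") (simp_all add: pw_op_def negpw_def)
qed

definition bopen :: "(real \<Rightarrow> 'a) set \<Rightarrow> bool" where
  "bopen U \<longleftrightarrow> U \<subseteq> step_funs G \<and>
     (\<forall>f\<in>U. \<exists>V \<epsilon>. openin T V \<and> e \<in> V \<and> \<epsilon> > 0 \<and> pw_op gop f ` O_nbhd G V \<epsilon> \<subseteq> U)"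

lemma bopenE:
  assumes "bopen U" "f \<in> U"
  obtains V \<epsilon> where "openin T V" "e \<in> V" "\<epsilon> > 0" "pw_op gop f ` O_nbhd G V \<epsilon> \<subseteq> U"
proof -
  have "\<forall>f\<in>U. \<exists>V \<epsilon>. openin T V \<and> e \<in> V \<and> \<epsilon> > 0 \<and> pw_op gop f ` O_nbhd G V \<epsilon> \<subseteq> U"
    using assms(1) unfolding bopen_def by (rule conjunct2)
  from bspec[OF this assms(2)] obtain V \<epsilon> where "openin T V" "e \<in> V" "\<epsilon> > 0"
      "pw_op gop f ` O_nbhd G V \<epsilon> \<subseteq> U" by (elim exE conjE)
  then show ?thesis by (rule that)
qed

lemma bopen_sub: "bopen U \<Longrightarrow> U \<subseteq> step_funs G"
  unfolding bopen_def by (rule conjunct1)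

lemma istop: "istopology bopen"
  unfolding istopology_def
proof (intro conjI allI impI)
  fix S U assume S: "bopen S" and U: "bopen U"
  show "bopen (S \<inter> U)" unfolding bopen_def
  proof (intro conjI ballI)
    show "S \<inter> U \<subseteq> step_funs G" using bopen_sub[OF S] by blast
    fix f assume f: "f \<in> S \<inter> U"
    obtain V1 \<epsilon>1 where 1: "openin T V1" "e \<in> V1" "\<epsilon>1 > 0" "pw_op gop f ` O_nbhd G V1 \<epsilon>1 \<subseteq> S"
      using S f by (elim bopenE) auto
    obtain V2 \<epsilon>2 where 2: "openin T V2" "e \<in> V2" "\<epsilon>2 > 0" "pw_op gop f ` O_nbhd G V2 \<epsilon>2 \<subseteq> U"
      using U f by (elim bopenE) auto
    have o1: "O_nbhd G (V1 \<inter> V2) (min \<epsilon>1 \<epsilon>2) \<subseteq> O_nbhd G V1 \<epsilon>1" by (rule O_mono) auto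
    have o2: "O_nbhd G (V1 \<inter> V2) (min \<epsilon>1 \<epsilon>2) \<subseteq> O_nbhd G V2 \<epsilon>2" by (rule O_mono) auto
    have "pw_op gop f ` O_nbhd G (V1 \<inter> V2) (min \<epsilon>1 \<epsilon>2) \<subseteq> S \<inter> U"
      by (rule Int_greatest[OF order_trans[OF image_mono[OF o1] 1(4)] order_trans[OF image_mono[OF o2] 2(4)]])
    moreover have "openin T (V1 \<inter> V2)" using 1(1) 2(1) by (rule openin_Int)
    moreover have "e \<in> V1 \<inter> V2" using 1(2) 2(2) by simp
    moreover have "min \<epsilon>1 \<epsilon>2 > 0" using 1(3) 2(3) by simp
    ultimately show "\<exists>V \<epsilon>. openin T V \<and> e \<in> V \<and> \<epsilon> > 0 \<and> pw_op gop f ` O_nbhd G V \<epsilon> \<subseteq> S \<inter> U"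
      by blast
  qed
next
  fix K assume K: "\<forall>U\<in>K. bopen U"
  show "bopen (\<Union>K)" unfolding bopen_def
  proof (intro conjI ballI)
    show "\<Union>K \<subseteq> step_funs G" using K bopen_sub by blast
    fix f assume "f \<in> \<Union>K"
    then obtain U where U: "U \<in> K" "f \<in> U" by blast
    have bU: "bopen U" using K U(1) by blast
    obtain V \<epsilon> where V: "openin T V" "e \<in> V" "\<epsilon> > 0" "pw_op gop f ` O_nbhd G V \<epsilon> \<subseteq> U"
      using bU U(2) by (rule bopenE)
    have "pw_op gop f ` O_nbhd G V \<epsilon> \<subseteq> \<Union>K" using V(4) U(1) by blast
    then show "\<exists>V \<epsilon>. openin T V \<and> e \<in> V \<and> \<epsilon> > 0 \<and> pw_op gop f ` O_nbhd G V \<epsilon> \<subseteq> \<Union>K"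
      using V(1-3) by blast
  qed
qed

abbreviation "BT \<equiv> bullet_topology G gop e T"

lemma openin_BT: "openin BT = bopen"
proof -
  have "bullet_topology G gop e T = topology bopen"
    unfolding bullet_topology_def bopen_def by simp
  then show ?thesis using istop by simp
qed

lemma topspace_BT: "topspace BT = step_funs G"
proof -
  have "bopen (step_funs G)" unfolding bopen_def
  proof (intro conjI ballI)
    fix f assume f: "f \<in> step_funs G"
    have "pw_op gop f ` O_nbhd G G 1 \<subseteq> step_funs G"
      using pw_step[OF f] by (auto simp: O_nbhd_def)
    then show "\<exists>V \<epsilon>. openin T V \<and> e \<in> V \<and> \<epsilon> > 0 \<and> pw_op gop f ` O_nbhd G V \<epsilon> \<subseteq> step_funs G"
      using topT by (intro exI[of _ G] exI[of _ 1]) auto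
  qed simp
  then show ?thesis unfolding topspace_def openin_BT bopen_def by blast
qed

lemma cont_BT:
  assumes inS: "\<And>x. x \<in> topspace X \<Longrightarrow> \<phi> x \<in> step_funs G"
    and loc: "\<And>x V \<epsilon>. x \<in> topspace X \<Longrightarrow> openin T V \<Longrightarrow> e \<in> V \<Longrightarrow> \<epsilon> > 0 \<Longrightarrow>
       \<exists>N. openin X N \<and> x \<in> N \<and> (\<forall>y\<in>N. \<phi> y \<in> pw_op gop (\<phi> x) ` O_nbhd G V \<epsilon>)"
  shows "continuous_map X BT \<phi>"
  unfolding continuous_map
proof (intro conjI allI impI)
  show "\<phi> ` topspace X \<subseteq> topspace BT" using inS topspace_BT by auto
  fix U assume U: "openin BT U"
  show "openin X {x \<in> topspace X. \<phi> x \<in> U}"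
  proof (rule openin_subopen[THEN iffD2], rule ballI)
    fix x assume x: "x \<in> {x \<in> topspace X. \<phi> x \<in> U}"
    have Ux: "\<phi> x \<in> U" and xt: "x \<in> topspace X" using x by simp_all
    have bU: "bopen U" using U openin_BT by simp
    then have "\<forall>f\<in>U. \<exists>V \<epsilon>. openin T V \<and> e \<in> V \<and> \<epsilon> > 0 \<and> pw_op gop f ` O_nbhd G V \<epsilon> \<subseteq> U"
      unfolding bopen_def by (rule conjunct2)
    from bspec[OF this Ux] obtain V \<epsilon> where V: "openin T V" "e \<in> V" "\<epsilon> > 0"
      "pw_op gop (\<phi> x) ` O_nbhd G V \<epsilon> \<subseteq> U" by (elim exE conjE)
    obtain N where N: "openin X N" "x \<in> N" "\<forall>y\<in>N. \<phi> y \<in> pw_op gop (\<phi> x) ` O_nbhd G V \<epsilon>"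
      using loc[OF xt V(1) V(2) V(3)] by (elim exE conjE)
    have "N \<subseteq> {x \<in> topspace X. \<phi> x \<in> U}"
    proof
      fix y assume y: "y \<in> N"
      have "\<phi> y \<in> U" by (rule subsetD[OF V(4) bspec[OF N(3) y]])
      moreover have "y \<in> topspace X" by (rule subsetD[OF openin_subset[OF N(1)] y])
      ultimately show "y \<in> {x \<in> topspace X. \<phi> x \<in> U}" by simp
    qed
    then show "\<exists>T. openin X T \<and> x \<in> T \<and> T \<subseteq> {x \<in> topspace X. \<phi> x \<in> U}" using N(1,2) by blast
  qed
qed

end


definition Phi :: "nat \<Rightarrow> (nat \<Rightarrow> real) \<times> (nat \<Rightarrow> 'a) \<Rightarrow> real \<Rightarrow> 'a" where
  "Phi n x = (\<lambda>r. if r \<in> J then snd x (card {i. i < n \<and> fst x i \<le> r}) else undefined)"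

lemma card_le_n: "card {i. i < n \<and> P i} \<le> n"
proof -
  have "card {i. i < n \<and> P i} \<le> card {..<n}" by (rule card_mono) auto
  then show ?thesis by simp
qed

lemma Phi_step:
  assumes c: "\<forall>k\<le>n. snd x k \<in> G"
  shows "Phi n x \<in> step_funs G"
proof -
  have H: "\<forall>r\<in>J. \<forall>r'\<in>J. r \<le> r' \<and> (\<forall>p\<in>fst x ` {..<n}. \<not> (r < p \<and> p \<le> r')) \<longrightarrow>
      Phi n x r = Phi n x r'"
  proof (intro ballI impI)
    fix r r' assume r: "r \<in> J" "r' \<in> J" and cc: "r \<le> r' \<and> (\<forall>p\<in>fst x ` {..<n}. \<not> (r < p \<and> p \<le> r'))"
    have "{i. i < n \<and> fst x i \<le> r} = {i. i < n \<and> fst x i \<le> r'}"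
    proof (intro set_eqI iffI)
      fix i assume "i \<in> {i. i < n \<and> fst x i \<le> r}"
      then show "i \<in> {i. i < n \<and> fst x i \<le> r'}" using cc by auto
    next
      fix i assume i: "i \<in> {i. i < n \<and> fst x i \<le> r'}"
      then have "fst x i \<in> fst x ` {..<n}" by auto
      then have "\<not> (r < fst x i \<and> fst x i \<le> r')" using cc by blast
      then show "i \<in> {i. i < n \<and> fst x i \<le> r}" using i by auto
    qed
    then show "Phi n x r = Phi n x r'" using r by (simp add: Phi_def)
  qed
  have u: "\<forall>r. r \<notin> J \<longrightarrow> Phi n x r = undefined" by (simp add: Phi_def)
  have v: "\<forall>r\<in>J. Phi n x r \<in> G" using c card_le_n by (simp add: Phi_def)
  have "stepP G (Phi n x)" unfolding stepP_def
    by (intro conjI u v exI[of _ "fst x ` {..<n}"], simp, rule H)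
  then show ?thesis by (simp add: step_funs_iff)
qed

context tgg begin

lemma cont_gop2:
  assumes "continuous_map X T f" "continuous_map X T g"
  shows "continuous_map X T (\<lambda>x. gop (f x) (g x))"
proof -
  have "continuous_map X T ((\<lambda>(x, y). gop x y) \<circ> (\<lambda>x. (f x, g x)))"
    by (rule continuous_map_compose[OF continuous_map_pairedI[OF assms] contop])
  then show ?thesis by (simp add: o_def)
qed

lemma cont_neg2:
  assumes "continuous_map X T f"
  shows "continuous_map X T (\<lambda>x. neg (f x))"
proof -
  have "continuous_map X T (neg \<circ> f)" by (rule continuous_map_compose[OF assms contneg])
  then show ?thesis by (simp add: o_def)
qed

lemma cont_lmul: "a \<in> G \<Longrightarrow> continuous_map T T (\<lambda>y. gop a y)"
  by (rule cont_gop2) (simp_all add: topT)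

lemma measure_Icc_leb: "a \<le> b \<Longrightarrow> measure lebesgue {a..b::real} = b - a"
  by simp


abbreviation "XX n \<equiv> prod_topology (product_topology (\<lambda>_. euclideanreal) {..<n}) (product_topology (\<lambda>_. T) {..n})"

lemma topspace_XX: "topspace (XX n) = (PiE {..<n} (\<lambda>_. UNIV)) \<times> (PiE {..n} (\<lambda>_. G))"
  by (simp add: topT)

lemma Phi_cont: "continuous_map (XX n) BT (Phi n)"
proof (rule cont_BT)
  fix x assume x: "x \<in> topspace (XX n)"
  then have "\<forall>k\<le>n. snd x k \<in> G" by (auto simp: topT PiE_iff)
  then show "Phi n x \<in> step_funs G" by (rule Phi_step)
next
  fix x V and \<epsilon> :: real
  assume x: "x \<in> topspace (XX n)" and V: "openin T V" "e \<in> V" and ep: "\<epsilon> > 0"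
  obtain t c where xtc: "x = (t, c)" by (cases x)
  have cG: "\<forall>k\<le>n. c k \<in> G" using x xtc by (auto simp: topT PiE_iff)
  define \<delta> where "\<delta> = \<epsilon> / (n + 1)"
  have dpos: "\<delta> > 0" using ep by (simp add: \<delta>_def)
  define A where "A = (\<lambda>i. {y \<in> topspace (XX n). fst y i \<in> {t i - \<delta> <..< t i + \<delta>}})"
  define B where "B = (\<lambda>k. {y \<in> topspace (XX n). gop (neg (c k)) (snd y k) \<in> V})"
  have oA: "openin (XX n) (A i)" if "i \<in> {..<n}" for i
  proof -
    have "continuous_map (XX n) euclideanreal ((\<lambda>z. z i) \<circ> fst)"
      by (rule continuous_map_compose[OF continuous_map_fst continuous_map_product_projection[OF that]])
    then have "continuous_map (XX n) euclideanreal (\<lambda>y. fst y i)" by (simp add: o_def)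
    then show ?thesis unfolding A_def by (rule openin_continuous_map_preimage) simp
  qed
  have oB: "openin (XX n) (B k)" if "k \<in> {..n}" for k
  proof -
    have "continuous_map (XX n) T ((\<lambda>z. z k) \<circ> snd)"
      by (rule continuous_map_compose[OF continuous_map_snd continuous_map_product_projection[OF that]])
    then have p: "continuous_map (XX n) T (\<lambda>y. snd y k)" by (simp add: o_def)
    have "continuous_map (XX n) T (\<lambda>y. gop (neg (c k)) (snd y k))"
      by (rule cont_gop2[OF _ p]) (use cG that topT in simp)
    then show ?thesis unfolding B_def using V(1) by (rule openin_continuous_map_preimage)
  qed
  define N where "N = ((\<Inter>i\<in>{..<n}. A i) \<inter> topspace (XX n)) \<inter> ((\<Inter>k\<in>{..n}. B k) \<inter> topspace (XX n))"
  have oN: "openin (XX n) N" unfolding N_def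
    by (intro openin_Int openin_INT) (auto intro: oA oB)
  have xN: "x \<in> N" unfolding N_def A_def B_def using x xtc dpos cG V(2) by auto
  have "\<forall>y\<in>N. Phi n y \<in> pw_op gop (Phi n x) ` O_nbhd G V \<epsilon>"
  proof
    fix y assume yN: "y \<in> N"
    obtain t' c' where ytc: "y = (t', c')" by (cases y)
    have yt: "y \<in> topspace (XX n)" using yN by (simp add: N_def)
    have th: "\<forall>i\<in>{..<n}. t i - \<delta> < t' i \<and> t' i < t i + \<delta>" using yN ytc unfolding N_def A_def by auto
    have tt: "\<forall>i<n. \<bar>t' i - t i\<bar> < \<delta>"
    proof (intro allI impI)
      fix i assume "i < n" then have "i \<in> {..<n}" by simp
      from bspec[OF th this] show "\<bar>t' i - t i\<bar> < \<delta>" by (auto simp: abs_less_iff)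
    qed
    have cc: "\<forall>k\<le>n. gop (neg (c k)) (c' k) \<in> V" using yN ytc unfolding N_def B_def by auto
    have xs: "Phi n x \<in> step_funs G" using cG xtc by (intro Phi_step) simp
    have c'G: "\<forall>k\<le>n. c' k \<in> G" using yt ytc by (auto simp: topT PiE_iff)
    have ys: "Phi n y \<in> step_funs G" using c'G ytc by (intro Phi_step) simp
    define g where "g = pw_op gop (negpw neg (Phi n x)) (Phi n y)"
    have gs: "g \<in> step_funs G" unfolding g_def by (intro pw_step negpw_step xs ys)
    have eq: "Phi n y = pw_op gop (Phi n x) g" unfolding g_def by (rule pw_cancel[OF xs ys, symmetric])
    define Bad where "Bad = (\<Union>i\<in>{..<n}. {min (t i) (t' i) .. max (t i) (t' i)})"
    have sub: "{r\<in>J. g r \<notin> V} \<subseteq> Bad"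
    proof
      fix r assume r: "r \<in> {r\<in>J. g r \<notin> V}"
      show "r \<in> Bad"
      proof (rule ccontr)
        assume "r \<notin> Bad"
        have same: "\<forall>i<n. (t i \<le> r) = (t' i \<le> r)"
        proof (intro allI impI)
          fix i assume i: "i < n"
          have "\<not> (min (t i) (t' i) \<le> r \<and> r \<le> max (t i) (t' i))"
            using \<open>r \<notin> Bad\<close> i unfolding Bad_def by auto
          then show "(t i \<le> r) = (t' i \<le> r)" by (auto simp: min_def max_def split: if_splits)
        qed
        then have seq: "{i. i < n \<and> t i \<le> r} = {i. i < n \<and> t' i \<le> r}" by auto
        define k where "k = card {i. i < n \<and> t i \<le> r}"
        have kn: "k \<le> n" unfolding k_def by (rule card_le_n)
        have "g r = gop (neg (c k)) (c' k)" using r seq xtc ytc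
          by (simp add: g_def pw_op_def negpw_def Phi_def k_def)
        then show False using cc kn r by auto
      qed
    qed
    have bad_lm: "Bad \<in> lmeasurable" unfolding Bad_def
      by (rule bounded_set_imp_lmeasurable) auto
    have "measure lebesgue {r\<in>J. g r \<notin> V} \<le> measure lebesgue Bad"
      by (rule measure_mono_fmeasurable[OF sub step_meas[OF gs] bad_lm])
    also have "\<dots> \<le> (\<Sum>i\<in>{..<n}. measure lebesgue {min (t i) (t' i) .. max (t i) (t' i)})"
      unfolding Bad_def by (rule measure_UNION_le) auto
    also have "\<dots> = (\<Sum>i\<in>{..<n}. \<bar>t' i - t i\<bar>)"
      by (intro sum.cong refl) (simp add: measure_Icc_leb, linarith)
    also have "\<dots> \<le> of_nat (card {..<n}) * \<delta>"
      by (rule sum_bounded_above) (use tt in auto)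
    also have "\<dots> < \<epsilon>" using ep by (simp add: \<delta>_def field_simps)
    finally have "g \<in> O_nbhd G V \<epsilon>" using gs by (simp add: O_nbhd_def)
    then show "Phi n y \<in> pw_op gop (Phi n x) ` O_nbhd G V \<epsilon>" using eq by blast
  qed
  then show "\<exists>N. openin (XX n) N \<and> x \<in> N \<and> (\<forall>y\<in>N. Phi n y \<in> pw_op gop (Phi n x) ` O_nbhd G V \<epsilon>)"
    using oN xN by blast
qed

end


context tgg begin

lemma Phi_surj:
  fixes K :: "nat \<Rightarrow> 'a set"
  assumes f: "f \<in> step_funs G" and K: "G = (\<Union>m. K m)" and mono: "\<And>m m'. m \<le> m' \<Longrightarrow> K m \<subseteq> K m'"
  shows "\<exists>n m. f \<in> Phi n ` (PiE {..<n} (\<lambda>_. {0..1}) \<times> PiE {..n} (\<lambda>_. K m))"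
proof -
  obtain a n c where h: "a 0 = 0" "a n = 1" "\<forall>k<n. a k < a (Suc k)"
    "\<forall>k<n. \<forall>r\<in>{a k..<a (Suc k)}. f r = c k" "\<forall>k<n. c k \<in> G"
    "\<forall>r. r \<notin> J \<longrightarrow> f r = undefined" by (rule step_funsE2[OF f])
  have npos: "n > 0" using h(1,2) by (cases n) auto
  have "\<forall>k. \<exists>m. k < n \<longrightarrow> c k \<in> K m" using h(5) K by blast
  then obtain mk where mk: "\<forall>k. k < n \<longrightarrow> c k \<in> K (mk k)" by metis
  define m where "m = Max (mk ` {..<n})"
  have cK: "c k \<in> K m" if "k < n" for k
  proof -
    have "mk k \<le> m" unfolding m_def using that by (intro Max_ge) auto
    then show ?thesis using mk that mono by blast
  qed
  define t where "t = restrict (\<lambda>i. a (Suc i)) {..<n}"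
  define cc where "cc = restrict (\<lambda>k. if k < n then c k else c 0) {..n}"
  have tP: "t \<in> PiE {..<n} (\<lambda>_. {0..1})"
  proof -
    have "a (Suc i) \<in> {0..1}" if "i < n" for i
      using seq_mono[OF h(3), of 0 "Suc i"] seq_mono[OF h(3), of "Suc i" n] h(1,2) that by simp
    then show ?thesis unfolding t_def by auto
  qed
  have cP: "cc \<in> PiE {..n} (\<lambda>_. K m)"
    unfolding cc_def using cK npos by auto
  have "Phi n (t, cc) = f"
  proof
    fix r show "Phi n (t, cc) r = f r"
    proof (cases "r \<in> J")
      case False then show ?thesis using h(6) by (simp add: Phi_def)
    next
      case True
      obtain k where k: "k < n" "a k \<le> r" "r < a (Suc k)" using step_cover[OF h(1-3) True] by blast
      have "{i. i < n \<and> t i \<le> r} = {..<k}"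
      proof (intro set_eqI iffI)
        fix i assume i: "i \<in> {i. i < n \<and> t i \<le> r}"
        then have "a (Suc i) \<le> r" by (auto simp: t_def)
        show "i \<in> {..<k}"
        proof (rule ccontr)
          assume "i \<notin> {..<k}"
          then have "Suc k \<le> Suc i" by simp
          then have "a (Suc k) \<le> a (Suc i)" using seq_mono[OF h(3)] i by simp
          then show False using k \<open>a (Suc i) \<le> r\<close> by simp
        qed
      next
        fix i assume i: "i \<in> {..<k}"
        then have "a (Suc i) \<le> a k" using seq_mono[OF h(3)] k by simp
        then show "i \<in> {i. i < n \<and> t i \<le> r}" using i k by (simp add: t_def)
      qed
      then have "Phi n (t, cc) r = c k" using True k by (simp add: Phi_def cc_def)
      moreover have "f r = c k" using h(4) k by simp
      ultimately show ?thesis by simp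
    qed
  qed
  then show ?thesis using tP cP by blast
qed

lemma sc_back:
  assumes "sigma_compact T"
  shows "sigma_compact BT"
proof -
  have "\<exists>K :: nat \<Rightarrow> 'a set. (\<forall>n. compactin T (K n)) \<and> topspace T = (\<Union>n. K n)"
    using assms unfolding sigma_compact_def .
  then obtain K :: "nat \<Rightarrow> 'a set" where K0: "(\<forall>n. compactin T (K n)) \<and> topspace T = (\<Union>n. K n)" ..
  have K: "\<forall>n. compactin T (K n)" "topspace T = (\<Union>n. K n)" using K0 by simp_all
  define K' where "K' = (\<lambda>m. \<Union>j\<in>{..m}. K j)"
  have cK': "compactin T (K' m)" for m
    unfolding K'_def by (rule compactin_Union) (use K in auto)
  have K'G: "G = (\<Union>m. K' m)" using K topT unfolding K'_def by auto
  have K'mono: "K' m \<subseteq> K' m'" if "m \<le> m'" for m m' unfolding K'_def using that by (auto intro: order_trans)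
  define S where "S = (\<lambda>n m. Phi n ` (PiE {..<n} (\<lambda>_. {0..1::real}) \<times> PiE {..n} (\<lambda>_. K' m)))"
  have cS: "compactin BT (S n m)" for n m
  proof -
    have "compactin (product_topology (\<lambda>_. euclideanreal) {..<n}) (PiE {..<n} (\<lambda>_. {0..1::real}))"
      by (simp add: compactin_PiE)
    moreover have "compactin (product_topology (\<lambda>_. T) {..n}) (PiE {..n} (\<lambda>_. K' m))"
      using cK' by (simp add: compactin_PiE)
    ultimately have "compactin (XX n) (PiE {..<n} (\<lambda>_. {0..1::real}) \<times> PiE {..n} (\<lambda>_. K' m))"
      by (simp add: compactin_Times)
    then show ?thesis unfolding S_def using Phi_cont by (rule image_compactin)
  qed
  define KK where "KK = (\<lambda>N. S (fst (prod_decode N)) (snd (prod_decode N)))"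
  have "topspace BT = (\<Union>N. KK N)"
  proof
    show "(\<Union>N. KK N) \<subseteq> topspace BT" unfolding KK_def using compactin_subset_topspace[OF cS] by blast
    show "topspace BT \<subseteq> (\<Union>N. KK N)"
    proof
      fix f assume "f \<in> topspace BT"
      then have f: "f \<in> step_funs G" by (simp add: topspace_BT)
      obtain n m where "f \<in> S n m" using Phi_surj[OF f K'G K'mono] unfolding S_def by blast
      then have "f \<in> KK (prod_encode (n, m))" by (simp add: KK_def)
      then show "f \<in> (\<Union>N. KK N)" by blast
    qed
  qed
  moreover have "\<forall>N. compactin BT (KK N)" unfolding KK_def using cS by blast
  ultimately show ?thesis unfolding sigma_compact_def by blast
qed

end


definition cst :: "'a \<Rightarrow> real \<Rightarrow> 'a" where
  "cst c = (\<lambda>r. if r \<in> J then c else undefined)"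

lemma cst_step: "c \<in> G \<Longrightarrow> cst c \<in> step_funs G"
proof -
  assume c: "c \<in> G"
  have H: "\<forall>r\<in>J. \<forall>r'\<in>J. r \<le> r' \<and> (\<forall>p\<in>{}. \<not> (r < p \<and> p \<le> r')) \<longrightarrow> cst c r = cst c r'"
    by (simp add: cst_def)
  have u: "\<forall>r. r \<notin> J \<longrightarrow> cst c r = undefined" by (simp add: cst_def)
  have v: "\<forall>r\<in>J. cst c r \<in> G" using c by (simp add: cst_def)
  have "stepP G (cst c)" unfolding stepP_def
    by (intro conjI u v exI[of _ "{}"], simp, rule H)
  then show ?thesis by (simp add: step_funs_iff)
qed

lemma measure_cst: "measure lebesgue {r\<in>J. cst c r \<notin> W} = (if c \<in> W then 0 else 1)"
proof -
  have "{r\<in>J. cst c r \<notin> W} = (if c \<in> W then {} else J)" by (auto simp: cst_def)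
  then show ?thesis using measure_J by simp
qed

context tgg begin

definition Ut :: "'a set \<Rightarrow> (real \<Rightarrow> 'a) set" where
  "Ut W = {f \<in> step_funs G. measure lebesgue {r\<in>J. f r \<notin> W} < 1/2}"

lemma Ut_open:
  assumes W: "openin T W"
  shows "openin BT (Ut W)"
  unfolding openin_BT bopen_def
proof (intro conjI ballI)
  show "Ut W \<subseteq> step_funs G" by (auto simp: Ut_def)
  fix f assume fU: "f \<in> Ut W"
  have fs: "f \<in> step_funs G" and m: "measure lebesgue {r\<in>J. f r \<notin> W} < 1/2"
    using fU by (simp_all add: Ut_def)
  define F where "F = f ` J \<inter> W"
  have finF: "finite F" unfolding F_def using step_vals(1)[OF fs] by simp
  have FG: "F \<subseteq> G" unfolding F_def using step_vals(2)[OF fs] by blast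
  define pre where "pre = (\<lambda>c. {y \<in> topspace T. gop c y \<in> W})"
  have opre: "openin T (pre c)" if "c \<in> F" for c
    unfolding pre_def using cont_lmul[of c] FG that W by (intro openin_continuous_map_preimage) auto
  define V where "V = (\<Inter>c\<in>F. pre c) \<inter> topspace T"
  have oV: "openin T V" unfolding V_def using finF opre by (intro openin_INT) auto
  have eV: "e \<in> V" unfolding V_def pre_def using FG topT by (auto simp: F_def)
  define \<epsilon> where "\<epsilon> = 1/2 - measure lebesgue {r\<in>J. f r \<notin> W}"
  have ep: "\<epsilon> > 0" using m by (simp add: \<epsilon>_def)
  have "pw_op gop f ` O_nbhd G V \<epsilon> \<subseteq> Ut W"
  proof
    fix h assume "h \<in> pw_op gop f ` O_nbhd G V \<epsilon>"
    then obtain g where g: "g \<in> O_nbhd G V \<epsilon>" and h: "h = pw_op gop f g" by blast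
    have gs: "g \<in> step_funs G" and gm: "measure lebesgue {r\<in>J. g r \<notin> V} < \<epsilon>"
      using g by (simp_all add: O_nbhd_def)
    have hs: "h \<in> step_funs G" unfolding h by (rule pw_step[OF fs gs])
    have sub: "{r\<in>J. h r \<notin> W} \<subseteq> {r\<in>J. f r \<notin> W} \<union> {r\<in>J. g r \<notin> V}"
    proof
      fix r assume r: "r \<in> {r\<in>J. h r \<notin> W}"
      show "r \<in> {r\<in>J. f r \<notin> W} \<union> {r\<in>J. g r \<notin> V}"
      proof (rule ccontr)
        assume "r \<notin> {r\<in>J. f r \<notin> W} \<union> {r\<in>J. g r \<notin> V}"
        then have fW: "f r \<in> W" and gV: "g r \<in> V" using r by auto
        have "f r \<in> F" using fW r by (simp add: F_def)
        then have "g r \<in> pre (f r)" using gV by (simp add: V_def)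
        then have "gop (f r) (g r) \<in> W" by (simp add: pre_def)
        then show False using r h by (auto simp: pw_op_def)
      qed
    qed
    have "measure lebesgue {r\<in>J. h r \<notin> W} \<le> measure lebesgue ({r\<in>J. f r \<notin> W} \<union> {r\<in>J. g r \<notin> V})"
      by (rule measure_mono_fmeasurable[OF sub step_meas[OF hs]])
         (intro fmeasurable.Un step_lmeas[OF fs] step_lmeas[OF gs])
    also have "\<dots> \<le> measure lebesgue {r\<in>J. f r \<notin> W} + measure lebesgue {r\<in>J. g r \<notin> V}"
      by (rule measure_Un_le[OF step_meas[OF fs] step_meas[OF gs]])
    also have "\<dots> < 1/2" using gm by (simp add: \<epsilon>_def)
    finally show "h \<in> Ut W" using hs by (simp add: Ut_def)
  qed
  then show "\<exists>V \<epsilon>. openin T V \<and> e \<in> V \<and> \<epsilon> > 0 \<and> pw_op gop f ` O_nbhd G V \<epsilon> \<subseteq> Ut W"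
    using oV eV ep by blast
qed

end


context tgg begin

lemma neg_e[simp]: "neg e = e"
  using negneg[of e] lid[of "neg e"] linv[of e] by (metis e_in neg_in rid)

abbreviation "CC \<equiv> cst ` G"

lemma step_pieceE:
  assumes fs: "f \<in> step_funs G" and r: "r \<in> J"
  obtains x y where "x < y" "{x..<y} \<subseteq> J" "\<forall>s\<in>{x..<y}. f s = f r"
proof -
  from step_piece[OF fs r] obtain x where "\<exists>y. x < y \<and> {x..<y} \<subseteq> J \<and> r \<in> {x..<y} \<and> (\<forall>s\<in>{x..<y}. f s = f r)" ..
  then obtain y where P: "x < y \<and> {x..<y} \<subseteq> J \<and> r \<in> {x..<y} \<and> (\<forall>s\<in>{x..<y}. f s = f r)" ..
  show ?thesis
    by (rule that[OF conjunct1[OF P] conjunct1[OF conjunct2[OF P]] conjunct2[OF conjunct2[OF conjunct2[OF P]]]])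
qed

lemma notC_nonconst:
  assumes fs: "f \<in> step_funs G" and fC: "f \<notin> CC"
  shows "\<exists>r1\<in>J. \<exists>r2\<in>J. f r1 \<noteq> f r2"
proof (rule ccontr)
  assume "\<not> (\<exists>r1\<in>J. \<exists>r2\<in>J. f r1 \<noteq> f r2)"
  then have H: "\<And>r1 r2. r1 \<in> J \<Longrightarrow> r2 \<in> J \<Longrightarrow> f r1 = f r2" by meson
  have J0: "0 \<in> J" by (simp add: J_def)
  have "f = cst (f 0)"
  proof
    fix r show "f r = cst (f 0) r"
    proof (cases "r \<in> J")
      case True then show ?thesis using H[OF True J0] by (simp add: cst_def)
    next
      case False then show ?thesis using step_undef[OF fs False] by (simp add: cst_def)
    qed
  qed
  moreover have "f 0 \<in> G" using step_valG[OF fs] by (simp add: J_def)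
  ultimately show False using fC by blast
qed

lemma sep_open:
  assumes c1: "c1 \<in> G" and c2: "c2 \<in> G" and ne: "c1 \<noteq> c2"
  obtains V where "openin T V" "e \<in> V" "\<And>v1 v2. v1 \<in> V \<Longrightarrow> v2 \<in> V \<Longrightarrow> gop c1 v1 \<noteq> gop c2 v2"
proof -
  define k where "k = (\<lambda>(v1, v2). gop (neg v2) (gop (neg c2) (gop c1 v1)))"
  have ck: "continuous_map (prod_topology T T) T k"
  proof -
    have "continuous_map (prod_topology T T) T (\<lambda>x. gop (neg (snd x)) (gop (neg c2) (gop c1 (fst x))))"
      by (intro cont_gop2 cont_neg2 continuous_map_snd continuous_map_fst)
         (simp_all add: topT c1 c2)
    then show ?thesis unfolding k_def by (simp add: case_prod_beta')
  qed
  define A where "A = topspace T - {e}"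
  have oA: "openin T A" unfolding A_def
    using closedin_t1_singleton[OF t1T, of e] topT by (simp add: closedin_def)
  define d where "d = gop (neg c2) c1"
  have dne: "d \<noteq> e"
  proof
    assume "d = e"
    then have "gop c2 d = c2" using c2 by simp
    moreover have "gop c2 d = c1" unfolding d_def using c1 c2 by simp
    ultimately show False using ne by simp
  qed
  have kee: "k (e, e) = d" unfolding k_def d_def using c1 c2 by simp
  define S where "S = {x \<in> topspace (prod_topology T T). k x \<in> A}"
  have oS: "openin (prod_topology T T) S" unfolding S_def
    by (rule openin_continuous_map_preimage[OF ck oA])
  have kA: "k (e, e) \<in> A" using kee dne topT c1 c2 by (simp add: A_def d_def)
  have eS: "(e, e) \<in> S" unfolding S_def using kA topT by simp
  have "\<forall>x y. (x, y) \<in> S \<longrightarrow> (\<exists>U V. openin T U \<and> openin T V \<and> x \<in> U \<and> y \<in> V \<and> U \<times> V \<subseteq> S)"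
    using oS by (simp only: openin_prod_topology_alt)
  then have "\<exists>U V. openin T U \<and> openin T V \<and> e \<in> U \<and> e \<in> V \<and> U \<times> V \<subseteq> S"
    using eS by blast
  then obtain U1 U2 where U: "openin T U1" "openin T U2" "e \<in> U1" "e \<in> U2"
    "U1 \<times> U2 \<subseteq> S" by (elim exE conjE)
  have "gop c1 v1 \<noteq> gop c2 v2" if v: "v1 \<in> U1 \<inter> U2" "v2 \<in> U1 \<inter> U2" for v1 v2
  proof
    assume eq: "gop c1 v1 = gop c2 v2"
    have vG: "v1 \<in> G" "v2 \<in> G" using v openin_subset[OF U(1)] topT by auto
    have "(v1, v2) \<in> U1 \<times> U2" using v by auto
    then have "k (v1, v2) \<in> A" using U(5) by (auto simp: S_def)
    moreover have "k (v1, v2) = e" unfolding k_def using eq vG c2 by simp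
    ultimately show False by (simp add: A_def)
  qed
  then show ?thesis using U by (intro that[of "U1 \<inter> U2"]) (auto intro: openin_Int)
qed

lemma piece_hit:
  assumes gs: "g \<in> step_funs G" and gm: "measure lebesgue {r\<in>J. g r \<notin> V} < y - x"
    and I: "{x..<y} \<subseteq> J" "x < y"
  shows "\<exists>s\<in>{x..<y}. g s \<in> V"
proof (rule ccontr)
  assume "\<not> (\<exists>s\<in>{x..<y}. g s \<in> V)"
  then have "{x..<y} \<subseteq> {r\<in>J. g r \<notin> V}" using I by auto
  then have "measure lebesgue {x..<y} \<le> measure lebesgue {r\<in>J. g r \<notin> V}"
    by (intro measure_mono_fmeasurable step_lmeas[OF gs]) auto
  then show False using gm I by simp
qed

lemma C_closed: "closedin BT CC"
  unfolding closedin_def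
proof (intro conjI)
  show "CC \<subseteq> topspace BT" using cst_step topspace_BT by auto
  show "openin BT (topspace BT - CC)"
    unfolding openin_BT bopen_def topspace_BT
  proof (intro conjI ballI)
    show "step_funs G - CC \<subseteq> step_funs G" by blast
    fix f assume f: "f \<in> step_funs G - CC"
    then have fs: "f \<in> step_funs G" and fC: "f \<notin> CC" by auto
    obtain r1 r2 where r: "r1 \<in> J" "r2 \<in> J" "f r1 \<noteq> f r2" using notC_nonconst[OF fs fC] by blast
    obtain x1 y1 where p1: "x1 < y1" "{x1..<y1} \<subseteq> J" "\<forall>s\<in>{x1..<y1}. f s = f r1"
      by (rule step_pieceE[OF fs r(1)])
    obtain x2 y2 where p2: "x2 < y2" "{x2..<y2} \<subseteq> J" "\<forall>s\<in>{x2..<y2}. f s = f r2"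
      by (rule step_pieceE[OF fs r(2)])
    have cG: "f r1 \<in> G" "f r2 \<in> G" using step_valG[OF fs] r by auto
    obtain V where V: "openin T V" "e \<in> V" "\<And>v1 v2. v1 \<in> V \<Longrightarrow> v2 \<in> V \<Longrightarrow> gop (f r1) v1 \<noteq> gop (f r2) v2"
      using sep_open[OF cG r(3)] by blast
    define \<epsilon> where "\<epsilon> = min (y1 - x1) (y2 - x2)"
    have ep: "\<epsilon> > 0" using p1 p2 by (simp add: \<epsilon>_def)
    have "pw_op gop f ` O_nbhd G V \<epsilon> \<subseteq> step_funs G - CC"
    proof
      fix h assume "h \<in> pw_op gop f ` O_nbhd G V \<epsilon>"
      then obtain g where g: "g \<in> O_nbhd G V \<epsilon>" and h: "h = pw_op gop f g" by blast
      have gs: "g \<in> step_funs G" and gm: "measure lebesgue {r\<in>J. g r \<notin> V} < \<epsilon>"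
        using g by (simp_all add: O_nbhd_def)
      have hs: "h \<in> step_funs G" unfolding h by (rule pw_step[OF fs gs])
      have gm1: "measure lebesgue {r\<in>J. g r \<notin> V} < y1 - x1" using gm by (simp add: \<epsilon>_def)
      have gm2: "measure lebesgue {r\<in>J. g r \<notin> V} < y2 - x2" using gm by (simp add: \<epsilon>_def)
      obtain s1 where s1: "s1 \<in> {x1..<y1}" "g s1 \<in> V"
        using piece_hit[OF gs gm1 p1(2) p1(1)] by blast
      obtain s2 where s2: "s2 \<in> {x2..<y2}" "g s2 \<in> V"
        using piece_hit[OF gs gm2 p2(2) p2(1)] by blast
      have "h \<notin> CC"
      proof
        assume "h \<in> CC"
        then obtain c where hc: "h = cst c" by blast
        have s1J: "s1 \<in> J" and s2J: "s2 \<in> J" using s1(1) s2(1) p1(2) p2(2) by auto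
        have fs1: "f s1 = f r1" using bspec[OF p1(3) s1(1)] .
        have fs2: "f s2 = f r2" using bspec[OF p2(3) s2(1)] .
        have "h s1 = gop (f r1) (g s1)" using s1J fs1 by (simp add: h pw_op_def)
        moreover have "h s2 = gop (f r2) (g s2)" using s2J fs2 by (simp add: h pw_op_def)
        moreover have "h s1 = c" "h s2 = c" using s1J s2J by (simp_all add: hc cst_def)
        ultimately have "gop (f r1) (g s1) = gop (f r2) (g s2)" by simp
        then show False using V(3)[OF s1(2) s2(2)] by simp
      qed
      then show "h \<in> step_funs G - CC" using hs by blast
    qed
    then show "\<exists>V \<epsilon>. openin T V \<and> e \<in> V \<and> \<epsilon> > 0 \<and> pw_op gop f ` O_nbhd G V \<epsilon> \<subseteq> step_funs G - CC"
      using V(1,2) ep by blast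
  qed
qed

end


context tgg begin

lemma L_compact:
  assumes K: "compactin BT K"
  shows "compactin T {c \<in> G. cst c \<in> K}"
  unfolding compactin_def
proof (intro conjI allI impI)
  show "{c \<in> G. cst c \<in> K} \<subseteq> topspace T" using topT by auto
  fix \<U> assume U: "(\<forall>U\<in>\<U>. openin T U) \<and> {c \<in> G. cst c \<in> K} \<subseteq> \<Union>\<U>"
  have cKC: "compactin BT (CC \<inter> K)" by (rule closed_Int_compactin[OF C_closed K])
  have op: "\<forall>W\<in>Ut ` \<U>. openin BT W" using U Ut_open by blast
  have cov: "CC \<inter> K \<subseteq> \<Union>(Ut ` \<U>)"
  proof
    fix f assume f: "f \<in> CC \<inter> K"
    then obtain c where c: "c \<in> G" "f = cst c" by blast
    then have "c \<in> {c \<in> G. cst c \<in> K}" using f by simp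
    then obtain U0 where U0: "U0 \<in> \<U>" "c \<in> U0" using U by blast
    have "f \<in> Ut U0" using c U0 cst_step[OF c(1)] by (simp add: Ut_def measure_cst)
    then show "f \<in> \<Union>(Ut ` \<U>)" using U0 by blast
  qed
  obtain \<G> where G: "finite \<G>" "\<G> \<subseteq> Ut ` \<U>" "CC \<inter> K \<subseteq> \<Union>\<G>"
    using cKC op cov unfolding compactin_def by meson
  obtain \<F> where F: "\<F> \<subseteq> \<U>" "finite \<F>" "\<G> = Ut ` \<F>"
    using finite_subset_image[OF G(1) G(2)] by blast
  have "{c \<in> G. cst c \<in> K} \<subseteq> \<Union>\<F>"
  proof
    fix c assume c: "c \<in> {c \<in> G. cst c \<in> K}"
    then have "cst c \<in> CC \<inter> K" by auto
    then obtain U0 where U0: "U0 \<in> \<F>" "cst c \<in> Ut U0" using G(3) F(3) by blast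
    then have "measure lebesgue {r\<in>J. cst c r \<notin> U0} < 1/2" by (simp add: Ut_def)
    then have "c \<in> U0" by (simp add: measure_cst split: if_splits)
    then show "c \<in> \<Union>\<F>" using U0 by blast
  qed
  then show "\<exists>\<F>. finite \<F> \<and> \<F> \<subseteq> \<U> \<and> {c \<in> G. cst c \<in> K} \<subseteq> \<Union>\<F>" using F by blast
qed

lemma sc_fwd:
  assumes "sigma_compact BT"
  shows "sigma_compact T"
proof -
  have "\<exists>K :: nat \<Rightarrow> (real \<Rightarrow> 'a) set. (\<forall>n. compactin BT (K n)) \<and> topspace BT = (\<Union>n. K n)"
    using assms unfolding sigma_compact_def .
  then obtain K :: "nat \<Rightarrow> (real \<Rightarrow> 'a) set" where K0: "(\<forall>n. compactin BT (K n)) \<and> topspace BT = (\<Union>n. K n)" ..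
  have K: "\<forall>n. compactin BT (K n)" "topspace BT = (\<Union>n. K n)" using K0 by simp_all
  define L where "L = (\<lambda>n. {c \<in> G. cst c \<in> K n})"
  have "\<forall>n. compactin T (L n)" unfolding L_def using K(1) L_compact by blast
  moreover have "topspace T = (\<Union>n. L n)"
  proof
    show "(\<Union>n. L n) \<subseteq> topspace T" using topT by (auto simp: L_def)
    show "topspace T \<subseteq> (\<Union>n. L n)"
    proof
      fix c assume "c \<in> topspace T"
      then have c: "c \<in> G" using topT by simp
      then have "cst c \<in> topspace BT" using cst_step topspace_BT by simp
      then obtain n where "cst c \<in> K n" using K(2) by blast
      then show "c \<in> (\<Union>n. L n)" using c by (auto simp: L_def)
    qed
  qed
  ultimately show ?thesis unfolding sigma_compact_def by blast
qed

end

theorem mainTheorem11: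
  fixes G :: "'a set" and gop :: "'a \<Rightarrow> 'a \<Rightarrow> 'a" and e :: 'a and neg :: "'a \<Rightarrow> 'a"
    and T :: "'a topology"
  assumes "topological_gyrogroup G gop e neg T"
  shows "sigma_compact (bullet_topology G gop e T) \<longleftrightarrow> sigma_compact T"
proof -
  interpret tgg G gop e neg T by (rule tgg.intro[OF assms])
  show ?thesis using sc_fwd sc_back by blast
qed


end
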